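(* Let $r\ge 1$ and let $M=(v_1,\dots,v_n)$ be a finite list (repetitions allowed) of nonzero vectors of $\mathbb{F}_2^r$ generating $\mathbb{F}_2^r$. Let $c_1(G)$ be the largest invariant factor (the exponent) of the sandpile group $K(G)$ of $G=G(\mathbb{F}_2^r,M)$. Then $$v_2(c_1(G))\le \lfloor \log_2 n\rfloor + r-1.$$
   Context: The Cayley graph $G=G(\mathbb{F}_2^r,M)$ has vertex set $\mathbb{F}_2^r$; its Laplacian $L(G)$ is the $2^r\times 2^r$ integer matrix indexed by $\mathbb{F}_2^r$ with $L(G)_{u,u}=n$ and $L(G)_{u,w}=-\#\{i: u+v_i=w\}$ for $u\neq w$. Then $\operatorname{coker}L(G)\cong \mathbb{Z}\oplus K(G)$ with $K(G)$ finite abelian (the sandpile group). For an integer $x\neq 0$, $v_2(x)$ is the largest $m$ with $2^m\mid x$. *)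

theory Defs
  imports Complex_Main "HOL-Computational_Algebra.Primes"
begin

text \<open>Vectors of F_2^r are encoded as functions nat => bool vanishing outside {..<r}.\<close>

definition vecs :: "nat \<Rightarrow> (nat \<Rightarrow> bool) set" where
  "vecs r = {v. \<forall>i\<ge>r. \<not> v i}"

definition vzero :: "nat \<Rightarrow> bool" where
  "vzero = (\<lambda>_. False)"

definition vadd :: "(nat \<Rightarrow> bool) \<Rightarrow> (nat \<Rightarrow> bool) \<Rightarrow> (nat \<Rightarrow> bool)" where
  "vadd u w = (\<lambda>i. u i \<noteq> w i)"

definition lsum :: "(nat \<Rightarrow> bool) list \<Rightarrow> nat set \<Rightarrow> (nat \<Rightarrow> bool)" where
  "lsum M S = (\<lambda>j. odd (card {i \<in> S. i < length M \<and> (M ! i) j}))"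

definition generates :: "nat \<Rightarrow> (nat \<Rightarrow> bool) list \<Rightarrow> bool" where
  "generates r M = (\<forall>w \<in> vecs r. \<exists>S \<subseteq> {..<length M}. lsum M S = w)"

definition laplacian :: "(nat \<Rightarrow> bool) list \<Rightarrow> (nat \<Rightarrow> bool) \<Rightarrow> (nat \<Rightarrow> bool) \<Rightarrow> int" where
  "laplacian M u w = (if u = w then int (length M)
     else - int (card {i. i < length M \<and> vadd u (M ! i) = w}))"

definition zvecs :: "nat \<Rightarrow> ((nat \<Rightarrow> bool) \<Rightarrow> int) set" where
  "zvecs r = {x. \<forall>u. u \<notin> vecs r \<longrightarrow> x u = 0}"

definition lap_image :: "nat \<Rightarrow> (nat \<Rightarrow> bool) list \<Rightarrow> ((nat \<Rightarrow> bool) \<Rightarrow> int) set" where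
  "lap_image r M = {x. \<exists>y \<in> zvecs r.
     x = (\<lambda>u. if u \<in> vecs r then (\<Sum>w\<in>vecs r. laplacian M u w * y w) else 0)}"

text \<open>Exponent (largest invariant factor) c_1 of the sandpile group K(G), i.e. of the
  torsion subgroup of coker L(G): the least e > 0 killing every torsion class.\<close>
definition sandpile_exponent :: "nat \<Rightarrow> (nat \<Rightarrow> bool) list \<Rightarrow> nat" where
  "sandpile_exponent r M = (LEAST e::nat. e > 0 \<and>
     (\<forall>x \<in> zvecs r. (\<exists>k::int. k \<noteq> 0 \<and> (\<lambda>u. k * x u) \<in> lap_image r M)
        \<longrightarrow> (\<lambda>u. int e * x u) \<in> lap_image r M))"

end

theory Submission
  imports Defs
begin


definition dotp :: "nat \<Rightarrow> (nat\<Rightarrow>bool) \<Rightarrow> (nat\<Rightarrow>bool) \<Rightarrow> nat" where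
  "dotp r a w = card {i. i<r \<and> a i \<and> w i}"
definition chi :: "nat \<Rightarrow> (nat\<Rightarrow>bool) \<Rightarrow> (nat\<Rightarrow>bool) \<Rightarrow> int" where
  "chi r a w = (if even (dotp r a w) then 1 else -1)"

lemma card_symdiff:
  assumes "finite A" "finite B"
  shows "card ((A-B) \<union> (B-A)) + 2*card(A\<inter>B) = card A + card B"
proof -
  have "card ((A-B) \<union> (B-A)) = card (A-B) + card (B-A)"
    by (rule card_Un_disjoint) (use assms in auto)
  moreover have "card A = card (A-B) + card (A\<inter>B)"
  proof -
    have "A = (A-B) \<union> (A\<inter>B)" by auto
    hence "card A = card ((A-B) \<union> (A\<inter>B))" by simp
    also have "\<dots> = card (A-B) + card (A\<inter>B)" by (rule card_Un_disjoint) (use assms in auto)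
    finally show ?thesis .
  qed
  moreover have "card B = card (B-A) + card (A\<inter>B)"
  proof -
    have "B = (B-A) \<union> (A\<inter>B)" by auto
    hence "card B = card ((B-A) \<union> (A\<inter>B))" by simp
    also have "\<dots> = card (B-A) + card (A\<inter>B)" by (rule card_Un_disjoint) (use assms in auto)
    finally show ?thesis .
  qed
  ultimately show ?thesis by simp
qed

lemma dot_vadd: "odd (dotp r a (vadd u v)) \<longleftrightarrow> (odd (dotp r a u) \<noteq> odd (dotp r a v))"
proof -
  define A where "A = {i. i<r \<and> a i \<and> u i}"
  define B where "B = {i. i<r \<and> a i \<and> v i}"
  have fA: "finite A" "finite B" unfolding A_def B_def by auto
  have "{i. i<r \<and> a i \<and> vadd u v i} = (A-B) \<union> (B-A)"
    unfolding A_def B_def vadd_def by auto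
  hence "dotp r a (vadd u v) + 2*card(A\<inter>B) = dotp r a u + dotp r a v"
    using card_symdiff[OF fA] unfolding dotp_def A_def B_def by simp
  hence "odd (dotp r a (vadd u v) + 2*card(A\<inter>B)) = odd (dotp r a u + dotp r a v)" by simp
  then show ?thesis by simp
qed

lemma chi_vadd: "chi r a (vadd u v) = chi r a u * chi r a v"
  unfolding chi_def using dot_vadd[of r a u v] by auto

lemma vecs_image: "vecs r = (\<lambda>S i. i \<in> S) ` Pow {..<r}"
proof
  show "vecs r \<subseteq> (\<lambda>S i. i \<in> S) ` Pow {..<r}"
  proof
    fix v assume "v \<in> vecs r"
    hence "{i. v i} \<in> Pow {..<r}" unfolding vecs_def using not_le by auto
    moreover have "v = (\<lambda>i. i \<in> {i. v i})" by simp
    ultimately show "v \<in> (\<lambda>S i. i \<in> S) ` Pow {..<r}" by blast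
  qed
  show "(\<lambda>S i. i \<in> S) ` Pow {..<r} \<subseteq> vecs r" unfolding vecs_def by auto
qed

lemma finite_vecs: "finite (vecs r)"
  unfolding vecs_image by auto

lemma card_vecs: "card (vecs r) = 2^r"
proof -
  have "inj_on (\<lambda>S i. i \<in> S) (Pow {..<r})"
    unfolding inj_on_def by (simp add: fun_eq_iff set_eq_iff)
  thus ?thesis unfolding vecs_image by (simp add: card_image card_Pow)
qed

lemma vadd_vecs: "u \<in> vecs r \<Longrightarrow> v \<in> vecs r \<Longrightarrow> vadd u v \<in> vecs r"
  unfolding vecs_def vadd_def by auto

lemma nonzero_vec: "a \<in> vecs r \<Longrightarrow> a \<noteq> vzero \<Longrightarrow> \<exists>j<r. a j"
proof (rule ccontr)
  assume a: "a \<in> vecs r" "a \<noteq> vzero" "\<not> (\<exists>j<r. a j)"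
  have "\<not> a i" for i using a(1,3) unfolding vecs_def by (cases "i < r") auto
  hence "a = vzero" unfolding vzero_def by auto
  with a(2) show False by simp
qed

definition flip :: "nat \<Rightarrow> (nat\<Rightarrow>bool) \<Rightarrow> (nat\<Rightarrow>bool)" where
  "flip j a = a(j := \<not> a j)"

lemma chi_flip:
  assumes "j < r" "w j"
  shows "chi r (flip j a) w = - chi r a w"
proof -
  define A where "A = {i. i<r \<and> a i \<and> w i}"
  have fA: "finite A" unfolding A_def by auto
  show ?thesis
  proof (cases "a j")
    case True
    hence "{i. i<r \<and> flip j a i \<and> w i} = A - {j}" unfolding A_def flip_def by auto
    moreover have "j \<in> A" using True assms unfolding A_def by auto
    moreover have "card A > 0" using fA \<open>j \<in> A\<close> by (auto simp: card_gt_0_iff)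
    ultimately have "dotp r (flip j a) w + 1 = dotp r a w" unfolding dotp_def A_def[symmetric]
      using fA by simp
    hence h: "dotp r a w = Suc (dotp r (flip j a) w)" by simp
    hence "even (dotp r (flip j a) w) \<longleftrightarrow> odd (dotp r a w)" by simp
    then show ?thesis unfolding chi_def by auto
  next
    case False
    hence "{i. i<r \<and> flip j a i \<and> w i} = insert j A" unfolding A_def flip_def using assms by auto
    moreover have "j \<notin> A" using False assms unfolding A_def by auto
    ultimately have "dotp r (flip j a) w = dotp r a w + 1" unfolding dotp_def A_def[symmetric]
      using fA by simp
    hence h: "dotp r (flip j a) w = Suc (dotp r a w)" by simp
    hence "even (dotp r (flip j a) w) \<longleftrightarrow> odd (dotp r a w)" by simp
    then show ?thesis unfolding chi_def by auto
  qed
qed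

lemma ortho:
  assumes "w \<in> vecs r"
  shows "(\<Sum>a\<in>vecs r. chi r a w) = (if w = vzero then 2^r else 0)"
proof (cases "w = vzero")
  case True
  hence "\<And>a. chi r a w = 1" unfolding chi_def dotp_def vzero_def by simp
  then show ?thesis using True card_vecs[of r] by simp
next
  case False
  then obtain j where j: "j < r" "w j" using nonzero_vec assms by blast
  have fl: "a \<in> vecs r \<Longrightarrow> flip j a \<in> vecs r" for a unfolding vecs_def flip_def using j by auto
  have ff: "flip j (flip j a) = a" for a unfolding flip_def by auto
  have "(\<Sum>a\<in>vecs r. chi r a w) = (\<Sum>a\<in>vecs r. chi r (flip j a) w)"
    by (rule sum.reindex_bij_witness[where i="flip j" and j="flip j"]) (auto simp: ff fl)
  also have "\<dots> = - (\<Sum>a\<in>vecs r. chi r a w)" using chi_flip[of j r w] j by (simp add: sum_negf)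
  finally show ?thesis using False by simp
qed



lemma lsum_insert:
  assumes "s \<notin> S" "s < length M"
  shows "lsum M (insert s S) = vadd (lsum M S) (M!s)"
proof
  fix j
  define C where "C = {i \<in> S. i < length M \<and> (M ! i) j}"
  have fC: "finite C" unfolding C_def by (rule finite_subset[of _ "{..<length M}"]) auto
  show "lsum M (insert s S) j = vadd (lsum M S) (M!s) j"
  proof (cases "(M!s) j")
    case True
    hence "{i \<in> insert s S. i < length M \<and> (M ! i) j} = insert s C" unfolding C_def using assms by auto
    moreover have "s \<notin> C" unfolding C_def using assms by auto
    ultimately show ?thesis unfolding lsum_def vadd_def C_def[symmetric] using fC True by simp
  next
    case False
    hence "{i \<in> insert s S. i < length M \<and> (M ! i) j} = C" unfolding C_def using assms by auto
    then show ?thesis unfolding lsum_def vadd_def C_def[symmetric] using False by simp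
  qed
qed

lemma lsum_even:
  assumes "\<forall>i<length M. even (dotp r a (M!i))" "S \<subseteq> {..<length M}"
  shows "even (dotp r a (lsum M S))"
proof -
  have "finite S" using assms(2) finite_subset by blast
  then show ?thesis using assms(2)
  proof (induction S rule: finite_induct)
    case empty
    have "lsum M {} = (\<lambda>j. False)" unfolding lsum_def by simp
    then show ?case unfolding dotp_def by simp
  next
    case (insert s S)
    hence "s < length M" "S \<subseteq> {..<length M}" by auto
    then show ?case using insert lsum_insert[of s S M] dot_vadd[of r a "lsum M S" "M!s"] assms(1) by auto
  qed
qed

definition mcount :: "nat \<Rightarrow> (nat \<Rightarrow> bool) list \<Rightarrow> (nat \<Rightarrow> bool) \<Rightarrow> nat" where
  "mcount r M a = card {i. i < length M \<and> odd (dotp r a (M!i))}"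

lemma mcount_le: "mcount r M a \<le> length M"
proof -
  have "card {i. i < length M \<and> odd (dotp r a (M!i))} \<le> card {..<length M}"
    by (rule card_mono) auto
  thus ?thesis unfolding mcount_def by simp
qed

lemma mcount_pos:
  assumes gen: "generates r M" and a: "a \<in> vecs r" "a \<noteq> vzero"
  shows "mcount r M a > 0"
proof (rule ccontr)
  assume "\<not> mcount r M a > 0"
  hence "card {i. i < length M \<and> odd (dotp r a (M!i))} = 0" unfolding mcount_def by simp
  hence ev: "\<forall>i<length M. even (dotp r a (M!i))" by (auto simp: card_eq_0_iff)
  obtain j where j: "j < r" "a j" using nonzero_vec a by blast
  have "(\<lambda>i. i = j) \<in> vecs r" unfolding vecs_def using j by auto
  then obtain S where S: "S \<subseteq> {..<length M}" "lsum M S = (\<lambda>i. i = j)"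
    using gen unfolding generates_def by blast
  have "{i. i<r \<and> a i \<and> i = j} = {j}" using j by auto
  hence "dotp r a (\<lambda>i. i = j) = 1" unfolding dotp_def by simp
  moreover have "even (dotp r a (lsum M S))" using lsum_even[OF ev S(1)] .
  ultimately show False using S(2) by simp
qed

lemma sum_chi_M:
  "(\<Sum>i<length M. chi r a (M!i)) = int (length M) - 2 * int (mcount r M a)"
proof -
  have "(\<Sum>i<length M. chi r a (M!i)) = (\<Sum>i<length M. 1 - 2 * (if odd (dotp r a (M!i)) then 1 else 0))"
    unfolding chi_def by (rule sum.cong) auto
  also have "\<dots> = int (length M) - 2 * (\<Sum>i<length M. (if odd (dotp r a (M!i)) then 1 else 0))"
    by (simp add: sum_subtractf sum_distrib_left)
  also have "(\<Sum>i<length M. (if odd (dotp r a (M!i)) then 1 else 0)) = (\<Sum>i\<in>{i\<in>{..<length M}. odd (dotp r a (M!i))}. (1::int))"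
    by (rule sum.inter_filter[symmetric]) simp
  also have "{i\<in>{..<length M}. odd (dotp r a (M!i))} = {i. i < length M \<and> odd (dotp r a (M!i))}" by auto
  also have "(\<Sum>i\<in>{i. i < length M \<and> odd (dotp r a (M!i))}. (1::int)) = int (mcount r M a)" unfolding mcount_def by simp
  finally show ?thesis .
qed

definition Lap :: "(nat \<Rightarrow> bool) list \<Rightarrow> ((nat \<Rightarrow> bool) \<Rightarrow> int) \<Rightarrow> (nat \<Rightarrow> bool) \<Rightarrow> int" where
  "Lap M y u = int (length M) * y u - (\<Sum>i<length M. y (vadd u (M!i)))"

lemma vadd_ne: "v \<noteq> vzero \<Longrightarrow> vadd u v \<noteq> u"
  unfolding vadd_def vzero_def by (auto simp: fun_eq_iff)

lemma lap_formula:
  assumes hM: "\<forall>v \<in> set M. v \<in> vecs r \<and> v \<noteq> vzero" and u: "u \<in> vecs r"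
  shows "(\<Sum>w\<in>vecs r. laplacian M u w * y w) = Lap M y u"
proof -
  have fin: "finite (vecs r)" by (rule finite_vecs)
  have Mi: "i < length M \<Longrightarrow> M!i \<in> vecs r \<and> M!i \<noteq> vzero" for i using hM by auto
  have "(\<Sum>w\<in>vecs r. laplacian M u w * y w) = laplacian M u u * y u + (\<Sum>w\<in>vecs r - {u}. laplacian M u w * y w)"
    by (rule sum.remove[OF fin u])
  also have "(\<Sum>w\<in>vecs r - {u}. laplacian M u w * y w) = - (\<Sum>w\<in>vecs r - {u}. int (card {i. i < length M \<and> vadd u (M!i) = w}) * y w)"
    unfolding sum_negf[symmetric] by (rule sum.cong) (auto simp: laplacian_def)
  also have "(\<Sum>w\<in>vecs r - {u}. int (card {i. i < length M \<and> vadd u (M!i) = w}) * y w)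
      = (\<Sum>w\<in>vecs r - {u}. (\<Sum>i\<in>{i\<in>{..<length M}. vadd u (M!i) = w}. y (vadd u (M!i))))"
  proof (rule sum.cong)
    fix w assume "w \<in> vecs r - {u}"
    have "(\<Sum>i\<in>{i\<in>{..<length M}. vadd u (M!i) = w}. y (vadd u (M!i))) = (\<Sum>i\<in>{i\<in>{..<length M}. vadd u (M!i) = w}. y w)"
      by (rule sum.cong) auto
    also have "\<dots> = int (card {i. i < length M \<and> vadd u (M!i) = w}) * y w"
      by (simp add: Collect_conj_eq[symmetric] lessThan_def)
    finally show "int (card {i. i < length M \<and> vadd u (M!i) = w}) * y w = (\<Sum>i\<in>{i\<in>{..<length M}. vadd u (M!i) = w}. y (vadd u (M!i)))" by simp
  qed simp
  also have "\<dots> = (\<Sum>i<length M. y (vadd u (M!i)))"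
    by (rule sum.group) (use fin Mi u vadd_vecs vadd_ne in auto)
  finally show ?thesis unfolding Lap_def laplacian_def by simp
qed

lemma Lap_chi:
  "Lap M (chi r a) u = chi r a u * 2 * int (mcount r M a)"
proof -
  have "Lap M (chi r a) u = int (length M) * chi r a u - (\<Sum>i<length M. chi r a u * chi r a (M!i))"
    unfolding Lap_def chi_vadd by simp
  also have "\<dots> = chi r a u * (int (length M) - (\<Sum>i<length M. chi r a (M!i)))"
    by (simp add: sum_distrib_left algebra_simps)
  also have "\<dots> = chi r a u * 2 * int (mcount r M a)" unfolding sum_chi_M by simp
  finally show ?thesis .
qed

definition gam :: "nat \<Rightarrow> (nat\<Rightarrow>bool) \<Rightarrow> (nat\<Rightarrow>bool) \<Rightarrow> int" where
  "gam r a w = (if odd (dotp r a w) then -1 else 0)"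

lemma Lap_gam: "Lap M (gam r a) u = int (mcount r M a) * chi r a u"
proof -
  have g2: "2 * gam r a w = chi r a w - 1" for w unfolding gam_def chi_def by simp
  have "2 * Lap M (gam r a) u = int (length M) * (2 * gam r a u) - (\<Sum>i<length M. 2 * gam r a (vadd u (M!i)))"
    unfolding Lap_def by (simp add: sum_distrib_left algebra_simps)
  also have "\<dots> = int (length M) * (chi r a u - 1) - (\<Sum>i<length M. chi r a (vadd u (M!i)) - 1)"
    unfolding g2 by simp
  also have "\<dots> = Lap M (chi r a) u"
    unfolding Lap_def by (simp add: sum_subtractf algebra_simps)
  finally show ?thesis unfolding Lap_chi by simp
qed

lemma Lap_sum: "finite A \<Longrightarrow> Lap M (\<lambda>w. \<Sum>a\<in>A. c a * f a w) u = (\<Sum>a\<in>A. c a * Lap M (f a) u)"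
  unfolding Lap_def
  by (simp add: sum_distrib_left sum_subtractf right_diff_distrib sum.swap[of _ "{..<length M}"] algebra_simps)

lemma chi_half:
  assumes r: "r \<ge> 1" and u: "u \<in> vecs r" and g: "g \<in> vecs r"
  shows "(\<Sum>a\<in>{a\<in>vecs r. odd (dotp r a g)}. chi r a u)
         = 2^(r-1) * ((if u = vzero then 1 else 0) - (if u = g then 1 else 0))"
proof -
  have fin: "finite (vecs r)" by (rule finite_vecs)
  have "2 * (\<Sum>a\<in>{a\<in>vecs r. odd (dotp r a g)}. chi r a u)
      = 2 * (\<Sum>a\<in>vecs r. if odd (dotp r a g) then chi r a u else 0)"
    by (simp add: sum.inter_filter[OF fin])
  also have "\<dots> = (\<Sum>a\<in>vecs r. chi r a u - chi r a (vadd g u))"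
    unfolding sum_distrib_left chi_vadd by (rule sum.cong) (auto simp: chi_def)
  also have "\<dots> = (\<Sum>a\<in>vecs r. chi r a u) - (\<Sum>a\<in>vecs r. chi r a (vadd g u))"
    by (simp add: sum_subtractf)
  also have "\<dots> = (if u = vzero then 2^r else 0) - (if vadd g u = vzero then 2^r else 0)"
    using ortho[OF u] ortho[OF vadd_vecs[OF g u]] by simp
  also have "(vadd g u = vzero) = (u = g)" unfolding vadd_def vzero_def by (auto simp: fun_eq_iff)
  also have "(2::int)^r = 2 * 2^(r-1)" using r by (metis Suc_diff_1 less_le_trans zero_less_one power_Suc)
  finally show ?thesis by auto
qed



definition ycore :: "nat \<Rightarrow> (nat\<Rightarrow>bool) list \<Rightarrow> nat \<Rightarrow> (nat\<Rightarrow>bool) \<Rightarrow> (nat\<Rightarrow>bool) \<Rightarrow> int" where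
  "ycore r M P g w = (if w \<in> vecs r then (\<Sum>a\<in>{a\<in>vecs r. odd (dotp r a g)}. int (P div mcount r M a) * gam r a w) else 0)"

lemma dot_zero: "dotp r vzero g = 0" unfolding dotp_def vzero_def by simp

lemma core:
  assumes hM: "\<forall>v \<in> set M. v \<in> vecs r \<and> v \<noteq> vzero" and r: "r \<ge> 1"
    and g: "g \<in> vecs r" and u: "u \<in> vecs r"
    and dv: "\<forall>a\<in>vecs r. a \<noteq> vzero \<longrightarrow> mcount r M a dvd P"
  shows "(\<Sum>w\<in>vecs r. laplacian M u w * ycore r M P g w)
       = int (2^(r-1) * P) * ((if u = vzero then 1 else 0) - (if u = g then 1 else 0))"
proof -
  let ?A = "{a\<in>vecs r. odd (dotp r a g)}"
  have finA: "finite ?A" using finite_vecs by auto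
  have Mi: "i < length M \<Longrightarrow> vadd u (M!i) \<in> vecs r" for i using hM u vadd_vecs by auto
  have "(\<Sum>w\<in>vecs r. laplacian M u w * ycore r M P g w) = Lap M (ycore r M P g) u"
    by (rule lap_formula[OF hM u])
  also have "\<dots> = Lap M (\<lambda>w. \<Sum>a\<in>?A. int (P div mcount r M a) * gam r a w) u"
  proof -
    have "(\<Sum>i<length M. ycore r M P g (vadd u (M!i))) = (\<Sum>i<length M. (\<Sum>a\<in>?A. int (P div mcount r M a) * gam r a (vadd u (M!i))))"
      by (rule sum.cong) (use Mi in \<open>auto simp: ycore_def\<close>)
    thus ?thesis unfolding Lap_def using u by (simp add: ycore_def)
  qed
  also have "\<dots> = (\<Sum>a\<in>?A. int (P div mcount r M a) * Lap M (gam r a) u)" by (rule Lap_sum[OF finA])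
  also have "\<dots> = (\<Sum>a\<in>?A. int P * chi r a u)"
  proof (rule sum.cong)
    fix a assume a: "a \<in> ?A"
    hence "a \<noteq> vzero" using dot_zero[of r g] by auto
    hence "mcount r M a dvd P" using dv a by auto
    hence "P div mcount r M a * mcount r M a = P" by simp
    hence "int (P div mcount r M a) * int (mcount r M a) = int P" by (metis of_nat_mult)
    thus "int (P div mcount r M a) * Lap M (gam r a) u = int P * chi r a u" unfolding Lap_gam
      by (metis mult.assoc)
  qed simp
  also have "\<dots> = int P * (\<Sum>a\<in>?A. chi r a u)" by (simp add: sum_distrib_left)
  also have "\<dots> = int P * (2^(r-1) * ((if u = vzero then 1 else 0) - (if u = g then 1 else 0)))"
    using chi_half[OF r u g] by simp
  finally show ?thesis by simp
qed

lemma vadd_swap: "(vadd u v = w) = (vadd w v = u)"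
  unfolding vadd_def fun_eq_iff by auto

lemma lap_sym: "laplacian M u w = laplacian M w u"
proof -
  have "{i. i < length M \<and> vadd u (M!i) = w} = {i. i < length M \<and> vadd w (M!i) = u}"
    using vadd_swap by blast
  thus ?thesis unfolding laplacian_def by auto
qed

lemma col_sum:
  assumes hM: "\<forall>v \<in> set M. v \<in> vecs r \<and> v \<noteq> vzero" and w: "w \<in> vecs r"
  shows "(\<Sum>u\<in>vecs r. laplacian M u w) = 0"
proof -
  have "(\<Sum>u\<in>vecs r. laplacian M u w) = (\<Sum>u\<in>vecs r. laplacian M w u * (\<lambda>_. 1) u)" using lap_sym by simp
  also have "\<dots> = Lap M (\<lambda>_. 1) w" by (rule lap_formula[OF hM w])
  also have "\<dots> = 0" unfolding Lap_def by simp
  finally show ?thesis .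
qed

lemma img_closed:
  assumes "a \<in> lap_image r M" "b \<in> lap_image r M"
  shows "(\<lambda>u. s * a u + t * b u) \<in> lap_image r M"
proof -
  obtain ya where ya: "ya \<in> zvecs r" "a = (\<lambda>u. if u \<in> vecs r then (\<Sum>w\<in>vecs r. laplacian M u w * ya w) else 0)"
    using assms(1) unfolding lap_image_def by blast
  obtain yb where yb: "yb \<in> zvecs r" "b = (\<lambda>u. if u \<in> vecs r then (\<Sum>w\<in>vecs r. laplacian M u w * yb w) else 0)"
    using assms(2) unfolding lap_image_def by blast
  let ?y = "\<lambda>w. s * ya w + t * yb w"
  have y1: "?y \<in> zvecs r" using ya yb unfolding zvecs_def by auto
  have y2: "(\<lambda>u. s * a u + t * b u) = (\<lambda>u. if u \<in> vecs r then (\<Sum>w\<in>vecs r. laplacian M u w * ?y w) else 0)"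
    unfolding ya(2) yb(2) by (auto simp: fun_eq_iff algebra_simps sum.distrib sum_distrib_left)
  show ?thesis unfolding lap_image_def mem_Collect_eq by (rule bexI[of _ "?y"]) (simp_all add: y1 y2)
qed

lemma killer:
  assumes hM: "\<forall>v \<in> set M. v \<in> vecs r \<and> v \<noteq> vzero" and r: "r \<ge> 1"
    and dv: "\<forall>a\<in>vecs r. a \<noteq> vzero \<longrightarrow> mcount r M a dvd P"
    and x: "x \<in> zvecs r" and k: "k \<noteq> 0" and kx: "(\<lambda>u. k * x u) \<in> lap_image r M"
  shows "(\<lambda>u. int (2^(r-1)*P) * x u) \<in> lap_image r M"
proof -
  let ?V = "vecs r"
  let ?e = "int (2^(r-1)*P)"
  have fin: "finite ?V" by (rule finite_vecs)
  obtain y where y: "y \<in> zvecs r" "(\<lambda>u. k * x u) = (\<lambda>u. if u \<in> ?V then (\<Sum>w\<in>?V. laplacian M u w * y w) else 0)"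
    using kx unfolding lap_image_def by blast
  have "k * (\<Sum>u\<in>?V. x u) = (\<Sum>u\<in>?V. k * x u)" by (simp add: sum_distrib_left)
  also have "\<dots> = (\<Sum>u\<in>?V. \<Sum>w\<in>?V. laplacian M u w * y w)"
  proof (rule sum.cong)
    fix u assume "u \<in> ?V" then show "k * x u = (\<Sum>w\<in>?V. laplacian M u w * y w)"
      using fun_cong[OF y(2), of u] by simp
  qed simp
  also have "\<dots> = (\<Sum>w\<in>?V. \<Sum>u\<in>?V. laplacian M u w * y w)" by (rule sum.swap)
  also have "\<dots> = (\<Sum>w\<in>?V. (\<Sum>u\<in>?V. laplacian M u w) * y w)" by (simp add: sum_distrib_right)
  also have "\<dots> = 0" using col_sum[OF hM] by simp
  finally have sx: "(\<Sum>u\<in>?V. x u) = 0" using k by simp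
  define Z where "Z = (\<lambda>w. if w \<in> ?V then - (\<Sum>h\<in>?V. x h * ycore r M P h w) else 0)"
  have Zz: "Z \<in> zvecs r" unfolding Z_def zvecs_def by auto
  have "(\<lambda>u. ?e * x u) = (\<lambda>u. if u \<in> ?V then (\<Sum>w\<in>?V. laplacian M u w * Z w) else 0)"
  proof
    fix u show "?e * x u = (if u \<in> ?V then (\<Sum>w\<in>?V. laplacian M u w * Z w) else 0)"
    proof (cases "u \<in> ?V")
      case False then show ?thesis using x unfolding zvecs_def by simp
    next
      case True
      have "(\<Sum>w\<in>?V. laplacian M u w * Z w) = (\<Sum>w\<in>?V. - (\<Sum>h\<in>?V. x h * (laplacian M u w * ycore r M P h w)))"
        unfolding Z_def by (rule sum.cong) (auto simp: sum_distrib_left algebra_simps)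
      also have "\<dots> = - (\<Sum>w\<in>?V. \<Sum>h\<in>?V. x h * (laplacian M u w * ycore r M P h w))"
        by (simp add: sum_negf)
      also have "(\<Sum>w\<in>?V. \<Sum>h\<in>?V. x h * (laplacian M u w * ycore r M P h w))
          = (\<Sum>h\<in>?V. \<Sum>w\<in>?V. x h * (laplacian M u w * ycore r M P h w))" by (rule sum.swap)
      also have "\<dots> = (\<Sum>h\<in>?V. x h * (\<Sum>w\<in>?V. laplacian M u w * ycore r M P h w))"
        by (simp add: sum_distrib_left)
      also have "\<dots> = (\<Sum>h\<in>?V. x h * (?e * ((if u = vzero then 1 else 0) - (if u = h then 1 else 0))))"
        by (rule sum.cong) (use core[OF hM r _ True dv] in auto)
      also have "\<dots> = (\<Sum>h\<in>?V. (?e * (if u = vzero then 1 else 0)) * x h - (if h = u then ?e * x h else 0))"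
        by (rule sum.cong) (auto simp: algebra_simps)
      also have "\<dots> = (?e * (if u = vzero then 1 else 0)) * (\<Sum>h\<in>?V. x h) - ?e * x u"
        using True fin by (simp add: sum_subtractf sum_distrib_left)
      finally show ?thesis using True sx by simp
    qed
  qed
  with Zz show ?thesis unfolding lap_image_def by blast
qed

definition kills :: "nat \<Rightarrow> (nat\<Rightarrow>bool) list \<Rightarrow> nat \<Rightarrow> bool" where
  "kills r M e = (\<forall>x \<in> zvecs r. (\<exists>k::int. k \<noteq> 0 \<and> (\<lambda>u. k * x u) \<in> lap_image r M)
        \<longrightarrow> (\<lambda>u. int e * x u) \<in> lap_image r M)"

lemma exp_dvd:
  assumes e: "e > 0" "kills r M e"
  shows "sandpile_exponent r M dvd e"
proof -
  define E where "E = sandpile_exponent r M"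
  have Eq: "E = (LEAST e. e > 0 \<and> kills r M e)" unfolding E_def sandpile_exponent_def kills_def by simp
  have E: "E > 0 \<and> kills r M E" unfolding Eq by (rule LeastI[of _ e]) (use e in simp)
  define d where "d = gcd E e"
  obtain s t where st: "s * int E + t * int e = int d"
    using bezout_int[of "int E" "int e"] unfolding d_def gcd_int_int_eq by blast
  have "kills r M d" unfolding kills_def
  proof (intro ballI impI)
    fix x assume x: "x \<in> zvecs r" and tor: "\<exists>k::int. k \<noteq> 0 \<and> (\<lambda>u. k * x u) \<in> lap_image r M"
    have a: "(\<lambda>u. int E * x u) \<in> lap_image r M" using E x tor unfolding kills_def by blast
    have b: "(\<lambda>u. int e * x u) \<in> lap_image r M" using e x tor unfolding kills_def by blast
    have "(\<lambda>u. s * (int E * x u) + t * (int e * x u)) \<in> lap_image r M" by (rule img_closed[OF a b])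
    moreover have "(\<lambda>u. s * (int E * x u) + t * (int e * x u)) = (\<lambda>u. int d * x u)"
      unfolding st[symmetric] by (simp add: algebra_simps)
    ultimately show "(\<lambda>u. int d * x u) \<in> lap_image r M" by simp
  qed
  moreover have "d > 0" using e(1) unfolding d_def by simp
  ultimately have "E \<le> d" unfolding Eq by (intro Least_le) auto
  moreover have "d dvd E" unfolding d_def by simp
  hence "d \<le> E" using E by (simp add: dvd_imp_le)
  ultimately have "d = E" by simp
  moreover have "d dvd e" unfolding d_def by simp
  ultimately show ?thesis unfolding E_def by simp
qed



theorem mainTheorem2:
  fixes r :: nat and M :: "(nat \<Rightarrow> bool) list"
  assumes "r \<ge> 1"
    and "\<forall>v \<in> set M. v \<in> vecs r \<and> v \<noteq> vzero"
    and "generates r M"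
  shows "int (multiplicity (2::nat) (sandpile_exponent r M))
           \<le> \<lfloor>log 2 (real (length M))\<rfloor> + int r - 1"
proof -
  note r = assms(1) and hM = assms(2) and gen = assms(3)
  define n where "n = length M"
  define e0 where "e0 = (\<lambda>i::nat. i = 0)"
  have e0: "e0 \<in> vecs r" "e0 \<noteq> vzero" using r unfolding e0_def vecs_def vzero_def by (auto simp: fun_eq_iff)
  have n1: "n \<ge> 1" using mcount_pos[OF gen e0] mcount_le[of r M e0] unfolding n_def by simp
  have lg: "log 2 (real n) \<ge> 0" using n1 by simp
  define k where "k = nat \<lfloor>log 2 (real n)\<rfloor>"
  have kf: "\<lfloor>log 2 (real n)\<rfloor> = int k" unfolding k_def using lg by simp
  have bounds: "2^k \<le> n \<and> n < 2^(k+1)"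
    using floor_log_nat_eq_powr_iff[of 2 n k] n1 kf by simp
  define Q where "Q = \<Prod>{j\<in>{1..n}. odd j}"
  have Qodd: "odd Q" unfolding Q_def by (subst even_prod_iff) auto
  define P where "P = 2^k * Q"
  have dv: "\<forall>a\<in>vecs r. a \<noteq> vzero \<longrightarrow> mcount r M a dvd P"
  proof (intro ballI impI)
    fix a assume a: "a \<in> vecs r" "a \<noteq> vzero"
    define m where "m = mcount r M a"
    have m0: "m > 0" unfolding m_def by (rule mcount_pos[OF gen a])
    have mn: "m \<le> n" unfolding m_def n_def by (rule mcount_le)
    define s where "s = multiplicity 2 m"
    obtain y where my: "m = 2^s * y" "\<not> 2 dvd y"
      using multiplicity_decompose'[of m 2] m0 unfolding s_def by auto
    have y0: "y > 0" using my m0 by (cases y) auto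
    have "2^s \<le> m" using my y0 by simp
    hence "(2::nat)^s < 2^(k+1)" using bounds mn by linarith
    hence sk: "s \<le> k" using power_less_imp_less_exp[of "2::nat" s "k+1"] by simp
    have "y \<le> m" using my(1) by simp
    hence "y \<in> {j\<in>{1..n}. odd j}" using y0 mn my(2) by auto
    hence "y dvd Q" unfolding Q_def by (intro dvd_prodI) auto
    moreover have "(2::nat)^s dvd 2^k" using sk by (simp add: le_imp_power_dvd)
    ultimately show "mcount r M a dvd P" unfolding P_def m_def[symmetric] my(1) by (rule mult_dvd_mono[rotated])
  qed
  have kil: "kills r M (2^(r-1)*P)" unfolding kills_def using killer[OF hM r dv] by blast
  have Q0: "Q > 0" using Qodd by (cases Q) auto
  have pos: "2^(r-1)*P > 0" unfolding P_def using Q0 by simp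
  have "sandpile_exponent r M dvd 2^(r-1)*P" by (rule exp_dvd[OF pos kil])
  hence "multiplicity 2 (sandpile_exponent r M) \<le> multiplicity 2 (2^(r-1)*P)"
    by (rule dvd_imp_multiplicity_le) (use pos in simp)
  also have "multiplicity (2::nat) (2^(r-1)*P) = r - 1 + k"
    by (rule multiplicity_decomposeI[where x'=Q]) (use Qodd in \<open>simp_all add: P_def power_add\<close>)
  finally have "int (multiplicity 2 (sandpile_exponent r M)) \<le> int (r - 1 + k)" by simp
  also have "\<dots> = \<lfloor>log 2 (real (length M))\<rfloor> + int r - 1" using r kf unfolding n_def by simp
  finally show ?thesis .
qed

end
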